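(* Let $C$ and $Q_1,\dots,Q_k$ ($k\ge0$) be subsets of $\{1,\dots,n\}$, let $W_i\subseteq Q_i$ for $1\le i\le k$, and let $Q=\bigcup_{i=1}^kQ_i$. Let $A_1,\dots,A_r\subseteq\{1,\dots,k\}$ ($r\le k$) be pairwise disjoint, and let $G_j=\bigcup_{i\in A_j}W_i$ for $1\le j\le r$. Let $R$ be any subset of $Q\setminus\bigcup_{j=1}^rG_j$. For a given joint distribution of $X_1,\dots,X_n$, if $K_1=(C,\langle Q_i,1\le i\le k\rangle)$ is valid, then $K_2(R)=(C\cup R,\langle G_j,1\le j\le r\rangle)$ is valid.
   Context: $X_1,\dots,X_n$ are jointly distributed discrete random variables with $H(X_i)<\infty$; $X_\alpha=(X_i,i\in\alpha)$, $X_\emptyset$ is a constant. A CMI $(C,\langle Q_1,\dots,Q_k\rangle)$ (with $C\subseteq\{1,\dots,n\}$ and an unordered multiset of subsets $Q_i$) is valid for a given distribution if $\sum_{i=1}^kH(X_{Q_i}|X_C)-H(X_{Q_1},\dots,X_{Q_k}|X_C)=0$, i.e., $X_{Q_1},\dots,X_{Q_k}$ are mutually independent conditioning on $X_C$ (automatically true when $k\le1$). *)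

theory Defs
  imports "HOL-Probability.Probability"
begin

text \<open>A joint distribution of discrete random variables X_1,...,X_n is modelled by a
  discrete probability space (a pmf M on an outcome type 'w) together with
  random variables X i :: 'w \<Rightarrow> 'v.\<close>

definition varset :: "(nat \<Rightarrow> 'w \<Rightarrow> 'v) \<Rightarrow> nat set \<Rightarrow> 'w \<Rightarrow> (nat \<Rightarrow> 'v)" where
  "varset X \<alpha> \<omega> = (\<lambda>i. if i \<in> \<alpha> then X i \<omega> else undefined)"

definition finite_entropy :: "'w pmf \<Rightarrow> ('w \<Rightarrow> 'v) \<Rightarrow> bool" where
  "finite_entropy M Y \<longleftrightarrow>
     (\<lambda>v. pmf (map_pmf Y M) v * ln (pmf (map_pmf Y M) v)) summable_on UNIV"

definition cprob :: "'w pmf \<Rightarrow> 'w set \<Rightarrow> 'w set \<Rightarrow> real" where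
  "cprob M A B = measure_pmf.prob M (A \<inter> B) / measure_pmf.prob M B"

text \<open>A CMI (C, <Q_1,...,Q_k>) (the multiset of Q_i given as a list) is valid iff
  X_{Q_1},...,X_{Q_k} are mutually independent conditionally on X_C.\<close>
definition valid_cmi :: "'w pmf \<Rightarrow> (nat \<Rightarrow> 'w \<Rightarrow> 'v) \<Rightarrow> nat set \<Rightarrow> nat set list \<Rightarrow> bool" where
  "valid_cmi M X C Qs \<longleftrightarrow>
    (\<forall>c as. length as = length Qs \<longrightarrow>
       measure_pmf.prob M {\<omega>. varset X C \<omega> = c} > 0 \<longrightarrow>
       cprob M {\<omega>. \<forall>i<length Qs. varset X (Qs ! i) \<omega> = as ! i} {\<omega>. varset X C \<omega> = c}
       = (\<Prod>i<length Qs. cprob M {\<omega>. varset X (Qs ! i) \<omega> = as ! i} {\<omega>. varset X C \<omega> = c}))"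

end

theory Submission
  imports Defs
begin

lemma measure_cond_pmf':
  assumes "measure_pmf.prob p s > 0"
  shows "measure_pmf.prob (cond_pmf p s) A = measure_pmf.prob p (A \<inter> s) / measure_pmf.prob p s"
proof -
  have ne: "set_pmf p \<inter> s \<noteq> {}" using assms measure_pmf_zero_iff[of p s] by linarith
  have e0: "emeasure (measure_pmf p) s \<noteq> 0" using assms
    by (simp add: measure_pmf.emeasure_eq_measure)
  have e1: "emeasure (measure_pmf p) s \<noteq> \<infinity>"
    by (simp add: measure_pmf.emeasure_eq_measure)
  have "measure_pmf.prob (cond_pmf p s) A = measure (uniform_measure (measure_pmf p) s) A"
    using cond_pmf.rep_eq[OF ne] by metis
  also have "\<dots> = measure_pmf.prob p (s \<inter> A) / measure_pmf.prob p s"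
    by (rule measure_uniform_measure[OF e0 e1]) simp
  finally show ?thesis by (simp add: Int_commute)
qed

lemma varset_eq:
  "varset X S \<omega> = g \<longleftrightarrow> (\<forall>v. v \<notin> S \<longrightarrow> g v = undefined) \<and> (\<forall>v\<in>S. X v \<omega> = g v)"
  unfolding varset_def fun_eq_iff by auto


lemma prod_sets_indep:
  fixes P :: "'w pmf" and Y :: "'i \<Rightarrow> 'w \<Rightarrow> 'b"
  assumes I: "finite I"
    and ind: "\<And>a. measure_pmf.prob P {\<omega>. \<forall>i\<in>I. Y i \<omega> = a i} = (\<Prod>i\<in>I. measure_pmf.prob P {\<omega>. Y i \<omega> = a i})"
  shows "measure_pmf.prob P {\<omega>. \<forall>i\<in>I. Y i \<omega> \<in> S i} = (\<Prod>i\<in>I. measure_pmf.prob P {\<omega>. Y i \<omega> \<in> S i})"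
proof -
  define d :: 'b where "d = undefined"
  define g where "g = (\<lambda>\<omega> i. if i \<in> I then Y i \<omega> else d)"
  have eq: "map_pmf g P = Pi_pmf I d (\<lambda>i. map_pmf (Y i) P)"
  proof (rule pmf_eqI)
    fix f
    show "pmf (map_pmf g P) f = pmf (Pi_pmf I d (\<lambda>i. map_pmf (Y i) P)) f"
    proof (cases "\<forall>x. x \<notin> I \<longrightarrow> f x = d")
      case True
      have 1: "g -` {f} = {\<omega>. \<forall>i\<in>I. Y i \<omega> = f i}"
      proof (intro set_eqI iffI)
        fix \<omega> assume "\<omega> \<in> g -` {f}" then show "\<omega> \<in> {\<omega>. \<forall>i\<in>I. Y i \<omega> = f i}"
          unfolding g_def by (simp add: fun_eq_iff) (metis)
      next
        fix \<omega> assume "\<omega> \<in> {\<omega>. \<forall>i\<in>I. Y i \<omega> = f i}" then show "\<omega> \<in> g -` {f}"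
          using True unfolding g_def by (simp add: fun_eq_iff)
      qed
      have 2: "\<And>i. Y i -` {f i} = {\<omega>. Y i \<omega> = f i}" by auto
      have "pmf (map_pmf g P) f = (\<Prod>i\<in>I. measure_pmf.prob P {\<omega>. Y i \<omega> = f i})"
        by (simp only: pmf_map 1 ind)
      also have "\<dots> = pmf (Pi_pmf I d (\<lambda>i. map_pmf (Y i) P)) f"
        using True I by (simp add: pmf_Pi pmf_map 2)
      finally show ?thesis .
    next
      case False
      then obtain x where x: "x \<notin> I" "f x \<noteq> d" by blast
      have "g \<omega> \<noteq> f" for \<omega>
      proof
        assume "g \<omega> = f" then have "g \<omega> x = f x" by simp
        then show False using x unfolding g_def by simp
      qed
      then have "g -` {f} = {}" by blast
      moreover have "pmf (Pi_pmf I d (\<lambda>i. map_pmf (Y i) P)) f = 0"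
        using x I by (intro pmf_Pi_outside) auto
      ultimately show ?thesis by (simp add: pmf_map)
    qed
  qed
  have "{\<omega>. \<forall>i\<in>I. Y i \<omega> \<in> S i} = g -` PiE_dflt I d S"
  proof (intro set_eqI iffI)
    fix \<omega> assume "\<omega> \<in> {\<omega>. \<forall>i\<in>I. Y i \<omega> \<in> S i}"
    then show "\<omega> \<in> g -` PiE_dflt I d S" unfolding g_def PiE_dflt_def by simp
  next
    fix \<omega> assume "\<omega> \<in> g -` PiE_dflt I d S"
    then show "\<omega> \<in> {\<omega>. \<forall>i\<in>I. Y i \<omega> \<in> S i}" unfolding g_def PiE_dflt_def by simp
  qed
  then have "measure_pmf.prob P {\<omega>. \<forall>i\<in>I. Y i \<omega> \<in> S i} = measure_pmf.prob (map_pmf g P) (PiE_dflt I d S)"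
    by simp
  also have "\<dots> = (\<Prod>i\<in>I. measure_pmf.prob (map_pmf (Y i) P) (S i))"
    unfolding eq by (rule measure_Pi_pmf_PiE_dflt[OF I])
  also have "\<dots> = (\<Prod>i\<in>I. measure_pmf.prob P {\<omega>. Y i \<omega> \<in> S i})"
    by (simp add: vimage_def)
  finally show ?thesis .
qed

theorem mainTheorem12:
  fixes M :: "'w pmf" and X :: "nat \<Rightarrow> 'w \<Rightarrow> 'v"
    and n k r :: nat and C R :: "nat set"
    and Q W :: "nat \<Rightarrow> nat set" and A :: "nat \<Rightarrow> nat set"
  assumes fin: "\<And>i. i \<in> {1..n} \<Longrightarrow> finite_entropy M (X i)"
    and C: "C \<subseteq> {1..n}"
    and Q: "\<And>i. i \<in> {1..k} \<Longrightarrow> Q i \<subseteq> {1..n}"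
    and W: "\<And>i. i \<in> {1..k} \<Longrightarrow> W i \<subseteq> Q i"
    and rk: "r \<le> k"
    and A: "\<And>j. j \<in> {1..r} \<Longrightarrow> A j \<subseteq> {1..k}"
    and disj: "\<And>j j'. j \<in> {1..r} \<Longrightarrow> j' \<in> {1..r} \<Longrightarrow> j \<noteq> j' \<Longrightarrow> A j \<inter> A j' = {}"
    and R: "R \<subseteq> (\<Union>i\<in>{1..k}. Q i) - (\<Union>j\<in>{1..r}. \<Union>i\<in>A j. W i)"
    and K1: "valid_cmi M X C (map Q [1..<k+1])"
  shows "valid_cmi M X (C \<union> R) (map (\<lambda>j. \<Union>i\<in>A j. W i) [1..<r+1])"
  unfolding valid_cmi_def
proof (intro allI impI)
  fix c' :: "nat \<Rightarrow> 'v" and gs :: "(nat \<Rightarrow> 'v) list"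
  define L where "L = map (\<lambda>j. \<Union>i\<in>A j. W i) [1..<r+1]"
  assume len: "length gs = length (map (\<lambda>j. \<Union>i\<in>A j. W i) [1..<r+1])"
    and pos0: "0 < measure_pmf.prob M {\<omega>. varset X (C \<union> R) \<omega> = c'}"
  define B' where "B' = {\<omega>. varset X (C \<union> R) \<omega> = c'}"
  define c where "c = (\<lambda>v. if v \<in> C then c' v else undefined)"
  define Bc where "Bc = {\<omega>. varset X C \<omega> = c}"
  define Y where "Y = (\<lambda>i. varset X (Q (i+1)))"
  define T where "T = (\<lambda>i. {y. \<forall>v\<in>R \<inter> Q (i+1). y v = c' v})"
  define Pc where "Pc = cond_pmf M Bc"
  have pos: "0 < measure_pmf.prob M B'" using pos0 B'_def by simp
  have lenL: "length L = r" and lenr: "length gs = r" using len by (simp_all add: L_def)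
  have Lnth: "L ! j = (\<Union>i\<in>A (j+1). W i)" if "j < r" for j
    using that by (simp add: L_def nth_map del: upt_Suc)
  have "B' \<noteq> {}" using pos by auto
  then obtain \<omega>0 where "\<omega>0 \<in> B'" by blast
  then have cnst': "\<forall>v. v \<notin> C \<union> R \<longrightarrow> c' v = undefined"
    unfolding B'_def varset_eq by blast
  have B'sub: "B' \<subseteq> Bc"
  proof
    fix \<omega> assume "\<omega> \<in> B'"
    then have "\<forall>v\<in>C \<union> R. X v \<omega> = c' v" unfolding B'_def varset_eq by blast
    then show "\<omega> \<in> Bc" unfolding Bc_def varset_eq c_def by simp
  qed
  have posc: "0 < measure_pmf.prob M Bc"
    using pos measure_pmf.finite_measure_mono[OF B'sub, of M] by simp
  have PcM: "measure_pmf.prob Pc E = measure_pmf.prob M (E \<inter> Bc) / measure_pmf.prob M Bc" for E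
    unfolding Pc_def by (rule measure_cond_pmf'[OF posc])
  have PcI: "measure_pmf.prob Pc E = measure_pmf.prob Pc E'" if "E \<inter> Bc = E' \<inter> Bc" for E E'
    using that by (simp add: PcM)
  have PcB': "measure_pmf.prob Pc B' > 0"
  proof -
    have "B' \<inter> Bc = B'" using B'sub by blast
    then show ?thesis using pos posc by (simp add: PcM)
  qed
  have cprob_eq: "cprob M E B' = measure_pmf.prob Pc (E \<inter> B') / measure_pmf.prob Pc B'" for E
  proof -
    have "E \<inter> B' \<inter> Bc = E \<inter> B'" "B' \<inter> Bc = B'" using B'sub by blast+
    then show ?thesis using posc unfolding cprob_def PcM by (simp add: field_simps)
  qed
  have cprob_c: "cprob M E Bc = measure_pmf.prob Pc E" for E
    unfolding cprob_def PcM ..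
  have ind0: "measure_pmf.prob Pc {\<omega>. \<forall>i\<in>{..<k}. Y i \<omega> = a i}
      = (\<Prod>i\<in>{..<k}. measure_pmf.prob Pc {\<omega>. Y i \<omega> = a i})" for a
  proof -
    have posc': "0 < measure_pmf.prob M {\<omega>. varset X C \<omega> = c}" using posc Bc_def by simp
    have l: "length (map a [0..<k]) = length (map Q [1..<k+1])" by simp
    have "cprob M {\<omega>. \<forall>i<length (map Q [1..<k+1]). varset X (map Q [1..<k+1] ! i) \<omega> = map a [0..<k] ! i} {\<omega>. varset X C \<omega> = c}
       = (\<Prod>i<length (map Q [1..<k+1]). cprob M {\<omega>. varset X (map Q [1..<k+1] ! i) \<omega> = map a [0..<k] ! i} {\<omega>. varset X C \<omega> = c})"
      using K1 l posc' unfolding valid_cmi_def by blast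
    moreover have "{\<omega>. \<forall>i<length (map Q [1..<k+1]). varset X (map Q [1..<k+1] ! i) \<omega> = map a [0..<k] ! i}
        = {\<omega>. \<forall>i\<in>{..<k}. Y i \<omega> = a i}"
      by (auto simp: Y_def nth_map simp del: upt_Suc)
    moreover have "(\<Prod>i<length (map Q [1..<k+1]). cprob M {\<omega>. varset X (map Q [1..<k+1] ! i) \<omega> = map a [0..<k] ! i} {\<omega>. varset X C \<omega> = c})
       = (\<Prod>i\<in>{..<k}. cprob M {\<omega>. Y i \<omega> = a i} Bc)"
      by (intro prod.cong) (simp_all add: Y_def nth_map Bc_def del: upt_Suc)
    ultimately show ?thesis unfolding Bc_def[symmetric] cprob_c by simp
  qed
  have ind: "measure_pmf.prob Pc {\<omega>. \<forall>i\<in>{..<k}. Y i \<omega> \<in> S i}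
      = (\<Prod>i\<in>{..<k}. measure_pmf.prob Pc {\<omega>. Y i \<omega> \<in> S i})" for S
    by (rule prod_sets_indep[OF _ ind0]) simp
  have YX: "Y i \<omega> v = X v \<omega>" if "v \<in> Q (i+1)" for i \<omega> v
    using that by (simp add: Y_def varset_def)
  have B'eq: "B' \<inter> Bc = {\<omega>. \<forall>i\<in>{..<k}. Y i \<omega> \<in> T i} \<inter> Bc"
  proof (intro set_eqI iffI)
    fix \<omega> assume "\<omega> \<in> B' \<inter> Bc"
    then have "\<forall>v\<in>C \<union> R. X v \<omega> = c' v" unfolding B'_def varset_eq by blast
    then have "Y i \<omega> \<in> T i" for i
      unfolding T_def by (simp add: YX)
    then show "\<omega> \<in> {\<omega>. \<forall>i\<in>{..<k}. Y i \<omega> \<in> T i} \<inter> Bc"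
      using \<open>\<omega> \<in> B' \<inter> Bc\<close> by blast
  next
    fix \<omega> assume a: "\<omega> \<in> {\<omega>. \<forall>i\<in>{..<k}. Y i \<omega> \<in> T i} \<inter> Bc"
    have "X v \<omega> = c' v" if "v \<in> C \<union> R" for v
    proof (cases "v \<in> C")
      case True
      then show ?thesis using a unfolding Bc_def varset_eq c_def by auto
    next
      case False
      then have "v \<in> R" using that by blast
      then obtain i where i: "i \<in> {1..k}" "v \<in> Q i" using R by blast
      then have "i - 1 \<in> {..<k}" "i - 1 + 1 = i" by auto
      then have "Y (i-1) \<omega> \<in> T (i-1)" using a by blast
      then have "\<forall>v\<in>R \<inter> Q i. Y (i-1) \<omega> v = c' v"
        unfolding T_def using \<open>i - 1 + 1 = i\<close> by simp
      then have "Y (i-1) \<omega> v = c' v" using i \<open>v \<in> R\<close> by blast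
      moreover have "Y (i-1) \<omega> v = X v \<omega>" using YX[of v "i-1" \<omega>] \<open>i - 1 + 1 = i\<close> i by simp
      ultimately show ?thesis by simp
    qed
    then show "\<omega> \<in> B' \<inter> Bc" using a cnst' unfolding B'_def varset_eq by blast
  qed
  define tt where "tt = (\<lambda>i. measure_pmf.prob Pc {\<omega>. Y i \<omega> \<in> T i})"
  have PcB'2: "measure_pmf.prob Pc B' = (\<Prod>i\<in>{..<k}. tt i)"
    unfolding tt_def using PcI[OF B'eq] ind by simp
  have tt0: "tt i \<noteq> 0" if "i < k" for i
  proof
    assume "tt i = 0"
    then have "prod tt {..<k} = 0" using that by (auto simp: prod_zero_iff)
    then show False using PcB' PcB'2 by linarith
  qed

  define Gs where "Gs = (\<lambda>j. \<Union>i\<in>A (j+1). W i)"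
  define g where "g = (\<lambda>j. gs ! j)"
  define E where "E = (\<lambda>j. {\<omega>. varset X (Gs j) \<omega> = g j})"
  define cn where "cn = (\<lambda>j. \<forall>v. v \<notin> Gs j \<longrightarrow> g j v = undefined)"
  define U where "U = (\<lambda>j i. if i+1 \<in> A (j+1) then {y. \<forall>v\<in>W (i+1). y v = g j v} else UNIV)"
  have Eeq: "E j = {\<omega>. cn j \<and> (\<forall>i\<in>{..<k}. Y i \<omega> \<in> U j i)}" if jr: "j < r" for j
  proof (intro set_eqI)
    fix \<omega>
    have "(\<forall>v\<in>Gs j. X v \<omega> = g j v) \<longleftrightarrow> (\<forall>i\<in>{..<k}. Y i \<omega> \<in> U j i)"
    proof
      assume h: "\<forall>v\<in>Gs j. X v \<omega> = g j v"
      show "\<forall>i\<in>{..<k}. Y i \<omega> \<in> U j i"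
      proof
        fix i assume ik: "i \<in> {..<k}"
        show "Y i \<omega> \<in> U j i"
        proof (cases "i+1 \<in> A (j+1)")
          case True
          have WQ: "W (i+1) \<subseteq> Q (i+1)" using W ik by simp
          have "\<forall>v\<in>W (i+1). X v \<omega> = g j v" using h True unfolding Gs_def by blast
          then have "\<forall>v\<in>W (i+1). Y i \<omega> v = g j v" using WQ YX[of _ i \<omega>] by auto
          then show ?thesis using True by (simp add: U_def)
        next
          case False
          then show ?thesis by (simp add: U_def)
        qed
      qed
    next
      assume h: "\<forall>i\<in>{..<k}. Y i \<omega> \<in> U j i"
      show "\<forall>v\<in>Gs j. X v \<omega> = g j v"
      proof
        fix v assume "v \<in> Gs j"
        then obtain i' where i': "i' \<in> A (j+1)" "v \<in> W i'" unfolding Gs_def by blast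
        have "j + 1 \<in> {1..r}" using jr by simp
        then have i'k: "i' \<in> {1..k}" using A i' by blast
        then have ii: "i' - 1 \<in> {..<k}" "i' - 1 + 1 = i'" by auto
        then have "Y (i'-1) \<omega> \<in> U j (i'-1)" using h by blast
        then have "\<forall>v\<in>W i'. Y (i'-1) \<omega> v = g j v" using i' ii by (simp add: U_def)
        then have "Y (i'-1) \<omega> v = g j v" using i' by blast
        moreover have "v \<in> Q i'" using W i'k i' by blast
        then have "Y (i'-1) \<omega> v = X v \<omega>" using YX[of v "i'-1" \<omega>] ii by simp
        ultimately show "X v \<omega> = g j v" by simp
      qed
    qed
    then show "\<omega> \<in> E j \<longleftrightarrow> \<omega> \<in> {\<omega>. cn j \<and> (\<forall>i\<in>{..<k}. Y i \<omega> \<in> U j i)}"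
      unfolding E_def varset_eq cn_def by blast
  qed
  have main: "cprob M {\<omega>. \<forall>j<r. \<omega> \<in> E j} B' = (\<Prod>j<r. cprob M (E j) B')"
  proof (cases "\<forall>j<r. cn j")
    case False
    then obtain j0 where j0: "j0 < r" "\<not> cn j0" by blast
    then have Ej0: "E j0 = {}" using Eeq by simp
    then have emp: "{\<omega>. \<forall>j<r. \<omega> \<in> E j} = {}" using j0 by blast
    have "cprob M {} B' = 0" by (simp add: cprob_def)
    then have "cprob M {\<omega>. \<forall>j<r. \<omega> \<in> E j} B' = 0" unfolding emp .
    moreover have "cprob M (E j0) B' = 0" using Ej0 by (simp add: cprob_def)
    then have "(\<Prod>j<r. cprob M (E j) B') = 0" using j0 by (auto simp: prod_zero_iff)
    ultimately show ?thesis by simp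
  next
    case True
    define V where "V = (\<lambda>i. \<Inter>j\<in>{..<r}. U j i)"
    define p where "p = (\<lambda>j i. measure_pmf.prob Pc {\<omega>. Y i \<omega> \<in> T i \<inter> U j i})"
    have EB: "(E j \<inter> B') \<inter> Bc = {\<omega>. \<forall>i\<in>{..<k}. Y i \<omega> \<in> T i \<inter> U j i} \<inter> Bc" if "j < r" for j
    proof -
      have "(E j \<inter> B') \<inter> Bc = E j \<inter> ({\<omega>. \<forall>i\<in>{..<k}. Y i \<omega> \<in> T i} \<inter> Bc)"
        using B'eq by blast
      also have "\<dots> = {\<omega>. \<forall>i\<in>{..<k}. Y i \<omega> \<in> T i \<inter> U j i} \<inter> Bc"
        using Eeq[OF that] True that by blast
      finally show ?thesis .
    qed
    have AB: "({\<omega>. \<forall>j<r. \<omega> \<in> E j} \<inter> B') \<inter> Bc = {\<omega>. \<forall>i\<in>{..<k}. Y i \<omega> \<in> T i \<inter> V i} \<inter> Bc"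
    proof -
      have e1: "{\<omega>. \<forall>j<r. \<omega> \<in> E j} = {\<omega>. \<forall>j<r. \<forall>i\<in>{..<k}. Y i \<omega> \<in> U j i}"
        using Eeq True by auto
      have "({\<omega>. \<forall>j<r. \<omega> \<in> E j} \<inter> B') \<inter> Bc = {\<omega>. \<forall>j<r. \<forall>i\<in>{..<k}. Y i \<omega> \<in> U j i} \<inter> ({\<omega>. \<forall>i\<in>{..<k}. Y i \<omega> \<in> T i} \<inter> Bc)"
        using B'eq unfolding e1 by blast
      also have "\<dots> = {\<omega>. \<forall>i\<in>{..<k}. Y i \<omega> \<in> T i \<inter> V i} \<inter> Bc"
        unfolding V_def by blast
      finally show ?thesis .
    qed
    have L1: "measure_pmf.prob Pc ({\<omega>. \<forall>j<r. \<omega> \<in> E j} \<inter> B') = (\<Prod>i<k. measure_pmf.prob Pc {\<omega>. Y i \<omega> \<in> T i \<inter> V i})"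
      unfolding PcI[OF AB] by (rule ind)
    have L2: "measure_pmf.prob Pc (E j \<inter> B') = (\<Prod>i<k. p j i)" if "j < r" for j
      unfolding PcI[OF EB[OF that]] p_def by (rule ind)
    have perI: "measure_pmf.prob Pc {\<omega>. Y i \<omega> \<in> T i \<inter> V i} / tt i = (\<Prod>j<r. p j i / tt i)" if ik: "i < k" for i
    proof (cases "\<exists>j0<r. i+1 \<in> A (j0+1)")
      case True
      then obtain j0 where j0: "j0 < r" "i+1 \<in> A (j0+1)" by blast
      have oth: "i+1 \<notin> A (j+1)" if "j < r" "j \<noteq> j0" for j
        using disj[of "j+1" "j0+1"] that j0 by auto
      have Uo: "U j i = UNIV" if "j < r" "j \<noteq> j0" for j
        using oth[OF that] by (simp add: U_def)
      have "V i = U j0 i"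
      proof
        show "V i \<subseteq> U j0 i" unfolding V_def using j0 by blast
        show "U j0 i \<subseteq> V i" unfolding V_def using Uo by blast
      qed
      have one: "p j i / tt i = 1" if "j \<in> {..<r} - {j0}" for j
        using Uo[of j] that tt0[OF ik] by (simp add: p_def tt_def)
      have "(\<Prod>j<r. p j i / tt i) = p j0 i / tt i * (\<Prod>j\<in>{..<r} - {j0}. p j i / tt i)"
        using j0 by (simp add: prod.remove)
      also have "(\<Prod>j\<in>{..<r} - {j0}. p j i / tt i) = 1"
        using one by (intro prod.neutral) blast
      finally show ?thesis using \<open>V i = U j0 i\<close> by (simp add: p_def)
    next
      case False
      have Uo: "U j i = UNIV" if "j < r" for j
        using False that by (simp add: U_def)
      then have "V i = UNIV" unfolding V_def by blast
      have one: "p j i / tt i = 1" if "j \<in> {..<r}" for j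
        using Uo[of j] that tt0[OF ik] by (simp add: p_def tt_def)
      then have "(\<Prod>j<r. p j i / tt i) = 1" by (intro prod.neutral) blast
      then show ?thesis using \<open>V i = UNIV\<close> tt0[OF ik] by (simp add: tt_def)
    qed
    have "cprob M {\<omega>. \<forall>j<r. \<omega> \<in> E j} B' = (\<Prod>i<k. measure_pmf.prob Pc {\<omega>. Y i \<omega> \<in> T i \<inter> V i}) / (\<Prod>i<k. tt i)"
      unfolding cprob_eq L1 PcB'2 ..
    also have "\<dots> = (\<Prod>i<k. measure_pmf.prob Pc {\<omega>. Y i \<omega> \<in> T i \<inter> V i} / tt i)"
      by (simp add: prod_dividef)
    also have "\<dots> = (\<Prod>i<k. \<Prod>j<r. p j i / tt i)"
      using perI by (intro prod.cong) auto
    also have "\<dots> = (\<Prod>j<r. \<Prod>i<k. p j i / tt i)"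
      by (rule prod.swap)
    also have "\<dots> = (\<Prod>j<r. (\<Prod>i<k. p j i) / (\<Prod>i<k. tt i))"
      by (simp add: prod_dividef)
    also have "\<dots> = (\<Prod>j<r. cprob M (E j) B')"
      using L2 by (intro prod.cong) (auto simp: cprob_eq PcB'2)
    finally show ?thesis .
  qed
  have s1: "{\<omega>. \<forall>j<length (map (\<lambda>j. \<Union>i\<in>A j. W i) [1..<r+1]). varset X (map (\<lambda>j. \<Union>i\<in>A j. W i) [1..<r+1] ! j) \<omega> = gs ! j}
     = {\<omega>. \<forall>j<r. \<omega> \<in> E j}"
    unfolding L_def[symmetric] using lenL Lnth by (auto simp: E_def Gs_def g_def)
  have s2: "(\<Prod>j<length (map (\<lambda>j. \<Union>i\<in>A j. W i) [1..<r+1]). cprob M {\<omega>. varset X (map (\<lambda>j. \<Union>i\<in>A j. W i) [1..<r+1] ! j) \<omega> = gs ! j} B')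
     = (\<Prod>j<r. cprob M (E j) B')"
    unfolding L_def[symmetric] lenL
    using Lnth by (intro prod.cong) (auto simp: E_def Gs_def g_def)
  show "cprob M {\<omega>. \<forall>i<length (map (\<lambda>j. \<Union>i\<in>A j. W i) [1..<r+1]). varset X ((map (\<lambda>j. \<Union>i\<in>A j. W i) [1..<r+1]) ! i) \<omega> = gs ! i} {\<omega>. varset X (C \<union> R) \<omega> = c'}
       = (\<Prod>i<length (map (\<lambda>j. \<Union>i\<in>A j. W i) [1..<r+1]). cprob M {\<omega>. varset X ((map (\<lambda>j. \<Union>i\<in>A j. W i) [1..<r+1]) ! i) \<omega> = gs ! i} {\<omega>. varset X (C \<union> R) \<omega> = c'})"
    unfolding s1 s2 B'_def[symmetric] by (rule main)
qed

end
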